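(* Let $\bar F$ be an $n$-superelliptic curve which admits a unique $n$-superelliptic automorphism group $G\cong\mathbb{Z}/n\mathbb{Z}$. Then $\sigma\circ\tau=\tau\circ\sigma$ for every $\sigma\in G$ and every $\tau\in\mathrm{Aut}(\bar F)$.
   Context: An $n$-superelliptic curve is a smooth projective curve birational to an affine curve $y^n=F(x)$ with $F$ a separable polynomial; for such a model, the subgroup of $\mathrm{Aut}(\bar F)$ generated by $(x,y)\mapsto(x,\xi y)$, $\xi$ a primitive $n$-th root of unity, is called an $n$-superelliptic automorphism group of $\bar F$. *)

theory Defs
  imports "HOL-Computational_Algebra.Polynomial"
begin

text \<open>The function field of the curve is modelled as the ambient field type 'a;
  the constant field is a subfield k of it, assumed algebraically closed.\<close>

definition is_subfield :: "'a::field set \<Rightarrow> bool" where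
  "is_subfield L \<longleftrightarrow> 0 \<in> L \<and> 1 \<in> L \<and>
     (\<forall>a\<in>L. \<forall>b\<in>L. a + b \<in> L \<and> a - b \<in> L \<and> a * b \<in> L) \<and>
     (\<forall>a\<in>L. inverse a \<in> L)"

definition poly_over :: "'a::field set \<Rightarrow> 'a poly \<Rightarrow> bool" where
  "poly_over k p \<longleftrightarrow> (\<forall>i. coeff p i \<in> k)"

definition alg_closed_subfield :: "'a::field set \<Rightarrow> bool" where
  "alg_closed_subfield k \<longleftrightarrow> is_subfield k \<and>
     (\<forall>p. poly_over k p \<and> degree p > 0 \<longrightarrow> (\<exists>r\<in>k. poly p r = 0))"

definition field_gen :: "'a::field set \<Rightarrow> 'a set \<Rightarrow> 'a set" where
  "field_gen k S = \<Inter>{L. is_subfield L \<and> k \<union> S \<subseteq> L}"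

definition transcendental_over :: "'a::field set \<Rightarrow> 'a \<Rightarrow> bool" where
  "transcendental_over k x \<longleftrightarrow> (\<forall>p. poly_over k p \<and> p \<noteq> 0 \<longrightarrow> poly p x \<noteq> 0)"

text \<open>k-automorphisms of the function field (= automorphisms of the curve).\<close>
definition Aut :: "'a::field set \<Rightarrow> ('a \<Rightarrow> 'a) set" where
  "Aut k = {s. bij s \<and> (\<forall>a b. s (a + b) = s a + s b) \<and> (\<forall>a b. s (a * b) = s a * s b)
              \<and> s 1 = 1 \<and> (\<forall>c\<in>k. s c = c)}"

definition superelliptic_model :: "'a::field set \<Rightarrow> nat \<Rightarrow> 'a \<Rightarrow> 'a \<Rightarrow> 'a poly \<Rightarrow> bool" where
  "superelliptic_model k n x y F \<longleftrightarrow> n \<ge> 2 \<and> transcendental_over k x \<and>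
     field_gen k {x, y} = UNIV \<and> poly_over k F \<and> degree F > 0 \<and> rsquarefree F \<and>
     y ^ n = poly F x"

definition primitive_root :: "nat \<Rightarrow> 'a::field \<Rightarrow> bool" where
  "primitive_root n \<xi> \<longleftrightarrow> \<xi> ^ n = 1 \<and> (\<forall>j. 0 < j \<and> j < n \<longrightarrow> \<xi> ^ j \<noteq> 1)"

definition superelliptic_curve :: "'a::field set \<Rightarrow> nat \<Rightarrow> bool" where
  "superelliptic_curve k n \<longleftrightarrow> (\<exists>x y F. superelliptic_model k n x y F)"

definition superelliptic_group :: "'a::field set \<Rightarrow> nat \<Rightarrow> ('a \<Rightarrow> 'a) set \<Rightarrow> bool" where
  "superelliptic_group k n G \<longleftrightarrow> (\<exists>x y F \<xi> s. superelliptic_model k n x y F \<and>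
      \<xi> \<in> k \<and> primitive_root n \<xi> \<and> s \<in> Aut k \<and> s x = x \<and> s y = \<xi> * y \<and>
      G = {s ^^ j | j. True})"

end

theory Submission
  imports Defs "HOL-Computational_Algebra.Primes"
begin


lemma subfieldD:
  assumes "is_subfield L"
  shows "0 \<in> L" "1 \<in> L" "a \<in> L \<Longrightarrow> b \<in> L \<Longrightarrow> a + b \<in> L"
    "a \<in> L \<Longrightarrow> b \<in> L \<Longrightarrow> a - b \<in> L" "a \<in> L \<Longrightarrow> b \<in> L \<Longrightarrow> a * b \<in> L"
    "a \<in> L \<Longrightarrow> inverse a \<in> L"
  using assms unfolding is_subfield_def by auto

lemma subfield_uminus: "is_subfield L \<Longrightarrow> a \<in> L \<Longrightarrow> - a \<in> L"
  by (metis diff_0 subfieldD(1,4))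

lemma subfield_divide: "is_subfield L \<Longrightarrow> a \<in> L \<Longrightarrow> b \<in> L \<Longrightarrow> a / b \<in> L"
  by (simp add: divide_inverse subfieldD)

lemma subfield_power: "is_subfield L \<Longrightarrow> a \<in> L \<Longrightarrow> a ^ m \<in> L"
  by (induction m) (auto intro: subfieldD)

lemma subfield_sum: "is_subfield L \<Longrightarrow> (\<And>i. i \<in> A \<Longrightarrow> f i \<in> L) \<Longrightarrow> sum f A \<in> L"
  by (induction A rule: infinite_finite_induct) (auto intro: subfieldD)

lemma subfield_prod: "is_subfield L \<Longrightarrow> (\<And>i. i \<in> A \<Longrightarrow> f i \<in> L) \<Longrightarrow> prod f A \<in> L"
  by (induction A rule: infinite_finite_induct) (auto intro: subfieldD)

lemma subfield_of_nat: "is_subfield L \<Longrightarrow> of_nat m \<in> L"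
  by (induction m) (auto intro: subfieldD)

lemma alg_closed_subfield: "alg_closed_subfield k \<Longrightarrow> is_subfield k"
  by (simp add: alg_closed_subfield_def)

lemma poly_over_coeff: "poly_over k p \<Longrightarrow> coeff p i \<in> k"
  by (simp add: poly_over_def)

lemma poly_over_0[simp]: "is_subfield k \<Longrightarrow> poly_over k 0"
  by (simp add: poly_over_def subfieldD)

lemma poly_over_pCons: "is_subfield k \<Longrightarrow> a \<in> k \<Longrightarrow> poly_over k p \<Longrightarrow> poly_over k (pCons a p)"
  by (simp add: poly_over_def coeff_pCons split: nat.split)

lemma poly_over_const: "is_subfield k \<Longrightarrow> a \<in> k \<Longrightarrow> poly_over k [:a:]"
  by (simp add: poly_over_pCons)

lemma poly_over_1: "is_subfield k \<Longrightarrow> poly_over k 1"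
  by (metis one_pCons poly_over_const subfieldD(2))

lemma poly_over_X: "is_subfield k \<Longrightarrow> poly_over k [:0,1:]"
  by (simp add: poly_over_pCons subfieldD)

lemma poly_over_add: "is_subfield k \<Longrightarrow> poly_over k p \<Longrightarrow> poly_over k q \<Longrightarrow> poly_over k (p + q)"
  by (simp add: poly_over_def subfieldD)

lemma poly_over_diff: "is_subfield k \<Longrightarrow> poly_over k p \<Longrightarrow> poly_over k q \<Longrightarrow> poly_over k (p - q)"
  by (simp add: poly_over_def subfieldD)

lemma poly_over_smult: "is_subfield k \<Longrightarrow> a \<in> k \<Longrightarrow> poly_over k p \<Longrightarrow> poly_over k (smult a p)"
  by (simp add: poly_over_def subfieldD)

lemma poly_over_mult: "is_subfield k \<Longrightarrow> poly_over k p \<Longrightarrow> poly_over k q \<Longrightarrow> poly_over k (p * q)"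
proof (induction p)
  case 0 then show ?case by simp
next
  case (pCons a p)
  have "pCons a p * q = smult a q + pCons 0 (p * q)" by simp
  moreover have "poly_over k (p * q)" using pCons
    by (metis poly_over_def coeff_pCons_Suc)
  ultimately show ?case using pCons
    by (metis poly_over_add poly_over_coeff poly_over_pCons poly_over_smult coeff_pCons_0 subfieldD(1))
qed

lemma poly_over_power: "is_subfield k \<Longrightarrow> poly_over k p \<Longrightarrow> poly_over k (p ^ m)"
  by (induction m) (auto simp: poly_over_1 poly_over_mult)

lemma poly_over_sum: "is_subfield k \<Longrightarrow> (\<And>i. i \<in> A \<Longrightarrow> poly_over k (f i)) \<Longrightarrow> poly_over k (sum f A)"
  by (induction A rule: infinite_finite_induct) (auto intro: poly_over_add)

lemma poly_over_poly: "is_subfield k \<Longrightarrow> poly_over k p \<Longrightarrow> c \<in> k \<Longrightarrow> poly p c \<in> k"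
  by (induction p) (auto intro: subfieldD simp: poly_over_def coeff_pCons split: nat.splits)

lemma poly_over_poly_gen: "is_subfield L \<Longrightarrow> poly_over k p \<Longrightarrow> k \<subseteq> L \<Longrightarrow> c \<in> L \<Longrightarrow> poly p c \<in> L"
proof (induction p)
  case 0 then show ?case by (simp add: subfieldD)
next
  case (pCons a p)
  have "poly_over k p" using pCons.prems by (metis poly_over_def coeff_pCons_Suc)
  moreover have "a \<in> L" using pCons.prems by (metis poly_over_def coeff_pCons_0 subsetD)
  ultimately show ?case using pCons by (auto intro: subfieldD)
qed

lemma poly_over_synthetic_div: "is_subfield k \<Longrightarrow> poly_over k p \<Longrightarrow> c \<in> k \<Longrightarrow> poly_over k (synthetic_div p c)"
proof (induction p)
  case 0 then show ?case by simp
next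
  case (pCons a p)
  have "poly_over k p" using pCons.prems by (metis poly_over_def coeff_pCons_Suc)
  then show ?case using pCons by (auto intro!: poly_over_pCons poly_over_poly)
qed

lemma poly_over_factor:
  assumes "is_subfield k" "poly_over k p" "c \<in> k" "poly p c = 0"
  shows "poly_over k (synthetic_div p c) \<and> p = [:-c,1:] * synthetic_div p c"
  using assms poly_over_synthetic_div synthetic_div_correct'[of c p] by auto

lemma poly_over_pcompose: "is_subfield k \<Longrightarrow> poly_over k p \<Longrightarrow> poly_over k q \<Longrightarrow> poly_over k (pcompose p q)"
proof (induction p)
  case 0 then show ?case by simp
next
  case (pCons a p)
  have "poly_over k p" using pCons.prems by (metis poly_over_def coeff_pCons_Suc)
  moreover have "a \<in> k" using pCons.prems by (metis poly_over_def coeff_pCons_0)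
  ultimately show ?case using pCons
    by (auto simp: pcompose_pCons intro!: poly_over_add poly_over_const poly_over_mult)
qed

lemma field_gen_subfield: "is_subfield (field_gen k S)"
  unfolding field_gen_def is_subfield_def by auto

lemma field_gen_sub: "k \<union> S \<subseteq> field_gen k S"
  unfolding field_gen_def by auto

lemma field_gen_least: "is_subfield L \<Longrightarrow> k \<union> S \<subseteq> L \<Longrightarrow> field_gen k S \<subseteq> L"
  unfolding field_gen_def by auto

lemma field_gen_UNIV: "field_gen k S = UNIV \<Longrightarrow> is_subfield L \<Longrightarrow> k \<union> S \<subseteq> L \<Longrightarrow> L = UNIV"
  using field_gen_least by blast

lemma transc_poly_eq:
  assumes "transcendental_over k x" "is_subfield k" "poly_over k p" "poly_over k q" "poly p x = poly q x"
  shows "p = q"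
proof -
  have "poly_over k (p - q)" using assms poly_over_diff by blast
  moreover have "poly (p - q) x = 0" using assms by simp
  ultimately show ?thesis using assms(1) unfolding transcendental_over_def by auto
qed

lemma transc_nonzero:
  "transcendental_over k x \<Longrightarrow> poly_over k p \<Longrightarrow> p \<noteq> 0 \<Longrightarrow> poly p x \<noteq> 0"
  unfolding transcendental_over_def by auto

lemma transc_notin:
  assumes "transcendental_over k x" "is_subfield k" shows "x \<notin> k"
proof
  assume "x \<in> k"
  then have "poly_over k [:-x,1:]" using assms by (simp add: poly_over_pCons subfield_uminus subfieldD)
  moreover have "poly [:-x,1:] x = 0" "[:-x,1:] \<noteq> 0" by simp_all
  ultimately show False using assms(1) unfolding transcendental_over_def by blast
qed

lemma alg_closed_in_k:
  assumes "alg_closed_subfield k" "poly_over k p" "p \<noteq> 0" "poly p z = 0"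
  shows "z \<in> k"
  using assms(2-4)
proof (induction "degree p" arbitrary: p rule: less_induct)
  case less
  have sf: "is_subfield k" using assms(1) alg_closed_subfield by blast
  show ?case
  proof (cases "degree p = 0")
    case True
    then obtain c where "p = [:c:]" by (metis degree_eq_zeroE)
    then show ?thesis using less by auto
  next
    case False
    then obtain r where r: "r \<in> k" "poly p r = 0" using assms(1) less.prems unfolding alg_closed_subfield_def by auto
    from poly_over_factor[OF sf less.prems(1) r] obtain q where q: "poly_over k q" "p = [:-r,1:] * q" by blast
    have "q \<noteq> 0" using q less.prems by auto
    have "degree ([:-r,1:] * q) = degree [:-r,1:] + degree q" using \<open>q \<noteq> 0\<close> by (intro degree_mult_eq) auto
    then have dq: "degree q < degree p" using q by simp
    have "poly p z = (z - r) * poly q z" by (subst q(2)) (simp add: algebra_simps)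
    then have "z - r = 0 \<or> poly q z = 0" using less.prems(3) by simp
    then show ?thesis using less.hyps[OF dq q(1) \<open>q \<noteq> 0\<close>] r by auto
  qed
qed

lemma transc_iff:
  assumes "alg_closed_subfield k" shows "transcendental_over k z \<longleftrightarrow> z \<notin> k"
  using alg_closed_in_k[OF assms] transc_notin[of k z] alg_closed_subfield[OF assms]
  unfolding transcendental_over_def by blast


lemma AutD:
  assumes "s \<in> Aut k"
  shows "bij s" "s (a + b) = s a + s b" "s (a * b) = s a * s b" "s 1 = 1" "c \<in> k \<Longrightarrow> s c = c"
  using assms unfolding Aut_def by auto

lemma aut_inj: "s \<in> Aut k \<Longrightarrow> s a = s b \<longleftrightarrow> a = b"
  using AutD(1) bij_is_inj inj_eq by metis

lemma aut_zero: assumes "s \<in> Aut k" shows "s 0 = 0"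
proof -
  have "s 0 = s 0 + s 0" using AutD(2)[OF assms, of 0 0] by simp
  then show ?thesis by (metis add_cancel_right_right)
qed

lemma aut_eq0: "s \<in> Aut k \<Longrightarrow> s a = 0 \<longleftrightarrow> a = 0"
  by (metis aut_inj aut_zero)

lemma aut_uminus: assumes "s \<in> Aut k" shows "s (- a) = - s a"
proof -
  have "s (- a) + s a = 0" using AutD(2)[OF assms, of "-a" a] aut_zero[OF assms] by simp
  then show ?thesis by (simp add: eq_neg_iff_add_eq_0)
qed

lemma aut_diff: "s \<in> Aut k \<Longrightarrow> s (a - b) = s a - s b"
  by (metis AutD(2) aut_uminus diff_conv_add_uminus)

lemma aut_inverse: assumes "s \<in> Aut k" shows "s (inverse a) = inverse (s a)"
proof (cases "a = 0")
  case True then show ?thesis using aut_zero[OF assms] by simp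
next
  case False
  have "s a * s (inverse a) = 1" using AutD(3,4)[OF assms] False by (metis right_inverse)
  then show ?thesis by (metis inverse_unique)
qed

lemma aut_divide: "s \<in> Aut k \<Longrightarrow> s (a / b) = s a / s b"
  by (simp add: divide_inverse AutD(3) aut_inverse)

lemma aut_power: "s \<in> Aut k \<Longrightarrow> s (a ^ m) = s a ^ m"
  by (induction m) (auto simp: AutD(3,4))

lemma aut_sum: "s \<in> Aut k \<Longrightarrow> s (sum f A) = (\<Sum>i\<in>A. s (f i))"
  by (induction A rule: infinite_finite_induct) (auto simp: AutD(2) aut_zero)

lemma aut_prod: "s \<in> Aut k \<Longrightarrow> s (prod f A) = (\<Prod>i\<in>A. s (f i))"
  by (induction A rule: infinite_finite_induct) (auto simp: AutD(3,4))

lemma aut_poly: assumes "s \<in> Aut k" "poly_over k p" shows "s (poly p z) = poly p (s z)"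
  using assms(2)
proof (induction p)
  case 0 then show ?case using aut_zero[OF assms(1)] by simp
next
  case (pCons a p)
  have "poly_over k p" using pCons.prems by (metis poly_over_def coeff_pCons_Suc)
  moreover have "a \<in> k" using pCons.prems by (metis poly_over_def coeff_pCons_0)
  ultimately show ?case using pCons AutD[OF assms(1)] by simp
qed

lemma aut_inv: assumes "s \<in> Aut k" shows "inv s \<in> Aut k"
proof -
  have b: "bij s" using AutD(1)[OF assms] .
  have si: "\<And>z. s (inv s z) = z" using b by (simp add: bij_is_surj surj_f_inv_f)
  have iv: "\<And>z. inv s (s z) = z" using b by (simp add: bij_is_inj)
  show ?thesis unfolding Aut_def
  proof (intro CollectI conjI allI ballI)
    show "bij (inv s)" using b by (simp add: bij_imp_bij_inv)
    fix a b
    show "inv s (a + b) = inv s a + inv s b" by (metis AutD(2)[OF assms] si iv)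
    show "inv s (a * b) = inv s a * inv s b" by (metis AutD(3)[OF assms] si iv)
  next
    show "inv s 1 = 1" by (metis AutD(4)[OF assms] iv)
  next
    fix c assume "c \<in> k" then show "inv s c = c" by (metis AutD(5)[OF assms] iv)
  qed
qed

lemma aut_comp: "f \<in> Aut k \<Longrightarrow> g \<in> Aut k \<Longrightarrow> f \<circ> g \<in> Aut k"
  unfolding Aut_def by (auto intro: bij_comp)

lemma aut_id: "id \<in> Aut k"
  unfolding Aut_def by auto

lemma aut_funpow: "f \<in> Aut k \<Longrightarrow> f ^^ m \<in> Aut k"
  by (induction m) (auto simp: aut_id aut_comp)

lemma aut_inv_left: "s \<in> Aut k \<Longrightarrow> inv s (s z) = z"
  by (meson AutD(1) bij_is_inj inv_f_f)

lemma aut_inv_right: "s \<in> Aut k \<Longrightarrow> s (inv s z) = z"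
  by (meson AutD(1) bij_is_surj surj_f_inv_f)

lemma aut_eq:
  assumes "f \<in> Aut k" "g \<in> Aut k" "field_gen k {x, y} = UNIV" "f x = g x" "f y = g y"
  shows "f = g"
proof -
  let ?L = "{z. f z = g z}"
  have "is_subfield ?L"
    unfolding is_subfield_def
    using assms(1,2) by (auto simp: aut_zero AutD aut_diff aut_inverse)
  moreover have "k \<union> {x, y} \<subseteq> ?L" using assms by (auto simp: AutD(5))
  ultimately have "?L = UNIV" using field_gen_UNIV[OF assms(3)] by blast
  then show ?thesis by auto
qed

lemma model_transport:
  assumes "superelliptic_model k n x y F" "t \<in> Aut k"
  shows "superelliptic_model k n (t x) (t y) F"
proof -
  have m: "n \<ge> 2" "transcendental_over k x" "field_gen k {x, y} = UNIV" "poly_over k F" "degree F > 0"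
    "rsquarefree F" "y ^ n = poly F x"
    using assms(1) unfolding superelliptic_model_def by auto
  have "transcendental_over k (t x)"
    unfolding transcendental_over_def
  proof (intro allI impI)
    fix p assume p: "poly_over k p \<and> p \<noteq> 0"
    then have "poly p x \<noteq> 0" using m(2) transc_nonzero by blast
    then show "poly p (t x) \<noteq> 0" using aut_poly[OF assms(2)] p aut_eq0[OF assms(2)] by metis
  qed
  moreover have "field_gen k {t x, t y} = UNIV"
  proof -
    let ?M = "field_gen k {t x, t y}"
    let ?L = "{z. t z \<in> ?M}"
    have sM: "is_subfield ?M" by (rule field_gen_subfield)
    have "is_subfield ?L" unfolding is_subfield_def
      using subfieldD[OF sM] by (auto simp: aut_zero[OF assms(2)] AutD[OF assms(2)] aut_diff[OF assms(2)] aut_inverse[OF assms(2)])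
    moreover have "k \<union> {x, y} \<subseteq> ?L" using field_gen_sub[of k "{t x, t y}"] AutD(5)[OF assms(2)] by auto
    ultimately have "?L = UNIV" using field_gen_UNIV[OF m(3)] by blast
    then have "\<And>z. t (inv t z) \<in> ?M" by auto
    then show ?thesis using aut_inv_right[OF assms(2)] by auto
  qed
  moreover have "t y ^ n = poly F (t x)" using m(7) aut_power[OF assms(2)] aut_poly[OF assms(2) m(4)] by metis
  ultimately show ?thesis using m unfolding superelliptic_model_def by auto
qed


lemma of_nat_zero_prime:
  "of_nat n = (0::'a::field) \<Longrightarrow> n > 0 \<Longrightarrow> \<exists>p. prime p \<and> p dvd n \<and> of_nat p = (0::'a)"
proof (induction n rule: less_induct)
  case (less n)
  have "n \<noteq> 1" using less.prems by auto
  then obtain p where p: "prime p" "p dvd n" using prime_factor_nat by blast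
  then obtain q where q: "n = p * q" by (auto elim: dvdE)
  have "(of_nat p :: 'a) * of_nat q = 0" using less.prems q by simp
  then consider "(of_nat p :: 'a) = 0" | "(of_nat q :: 'a) = 0" by auto
  then show ?case
  proof cases
    case 1 then show ?thesis using p by blast
  next
    case 2
    have "q > 0" using q less.prems by (cases q) auto
    moreover have "p \<ge> 2" using p prime_ge_2_nat by blast
    ultimately have "q < n" using q by simp
    then obtain p' where "prime p'" "p' dvd q" "of_nat p' = (0::'a)"
      using less.IH[OF _ 2 \<open>q > 0\<close>] by blast
    then show ?thesis using q by auto
  qed
qed

lemma freshman:
  fixes a b :: "'a::field"
  assumes "prime p" "of_nat p = (0::'a)"
  shows "(a + b) ^ p = a ^ p + b ^ p"
proof -
  have "(a + b) ^ p = (\<Sum>k\<le>p. of_nat (p choose k) * a ^ k * b ^ (p - k))"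
    by (simp add: binomial_ring)
  also have "\<dots> = (\<Sum>k\<le>p. if k = 0 then b ^ p else if k = p then a ^ p else 0)"
  proof (rule sum.cong)
    fix k assume k: "k \<in> {..p}"
    show "of_nat (p choose k) * a ^ k * b ^ (p - k) = (if k = 0 then b ^ p else if k = p then a ^ p else 0)"
    proof (cases "k = 0 \<or> k = p")
      case True then show ?thesis using assms prime_gt_0_nat by fastforce
    next
      case False
      then have "p dvd (p choose k)" using k assms(1) by (intro dvd_choose_prime) auto
      then obtain c where "p choose k = p * c" by (auto elim: dvdE)
      then show ?thesis using False assms(2) by simp
    qed
  qed simp
  also have "\<dots> = a ^ p + b ^ p"
  proof -
    obtain q where q: "p = Suc q" using assms(1) prime_gt_0_nat not0_implies_Suc by blast
    show ?thesis unfolding q sum.atMost_Suc_shift by (simp add: sum.delta' add.commute)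
  qed
  finally show ?thesis .
qed

lemma prim_n_nonzero:
  assumes "primitive_root n (\<xi>::'a::field)" "n > 0"
  shows "(of_nat n :: 'a) \<noteq> 0"
proof
  assume n0: "(of_nat n :: 'a) = 0"
  obtain p where p: "prime p" "p dvd n" "of_nat p = (0::'a)" using of_nat_zero_prime[OF n0 assms(2)] by blast
  obtain q where q: "n = p * q" using p(2) by (auto elim: dvdE)
  have p2: "p \<ge> 2" using p prime_ge_2_nat by blast
  have "q > 0" using q assms(2) by (cases q) auto
  then have qn: "q < n" using q p2 by simp
  let ?z = "\<xi> ^ q"
  have z1: "?z ^ p = 1" using assms(1) q unfolding primitive_root_def by (simp add: power_mult[symmetric] mult.commute)
  have "(?z + (-1)) ^ p = ?z ^ p + (-1) ^ p" by (rule freshman[OF p(1,3)])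
  also have "\<dots> = 1 + (-1) ^ p" using z1 by simp
  also have "\<dots> = (1 + (-1 :: 'a)) ^ p" using freshman[OF p(1,3), of 1 "-1"] by simp
  also have "\<dots> = 0" using p2 by simp
  finally have "?z = 1" by simp
  then show False using assms(1) \<open>q > 0\<close> qn unfolding primitive_root_def by blast
qed


definition ratset :: "'a::field set \<Rightarrow> 'a \<Rightarrow> 'a set" where
  "ratset k z = {poly P z / poly Q z | P Q. poly_over k P \<and> poly_over k Q \<and> Q \<noteq> 0}"

lemma ratsetI: "poly_over k P \<Longrightarrow> poly_over k Q \<Longrightarrow> Q \<noteq> 0 \<Longrightarrow> a = poly P z / poly Q z \<Longrightarrow> a \<in> ratset k z"
  unfolding ratset_def by blast

lemma ratset_subfield:
  assumes sf: "is_subfield k" and t: "transcendental_over k z"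
  shows "is_subfield (ratset k z)"
proof -
  have nz: "\<And>Q. poly_over k Q \<Longrightarrow> Q \<noteq> 0 \<Longrightarrow> poly Q z \<noteq> 0" using t transc_nonzero by blast
  have p0: "poly_over k 0" and p1: "poly_over k 1" using sf poly_over_1 by auto
  show ?thesis unfolding is_subfield_def
  proof (intro conjI ballI)
    show "0 \<in> ratset k z" by (rule ratsetI[OF p0 p1]) simp_all
    show "1 \<in> ratset k z" by (rule ratsetI[OF p1 p1]) simp_all
  next
    fix a b assume a: "a \<in> ratset k z" and b: "b \<in> ratset k z"
    then obtain P1 Q1 P2 Q2 where pq: "a = poly P1 z / poly Q1 z" "poly_over k P1" "poly_over k Q1" "Q1 \<noteq> 0"
      "b = poly P2 z / poly Q2 z" "poly_over k P2" "poly_over k Q2" "Q2 \<noteq> 0"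
      unfolding ratset_def by blast
    have q1: "poly Q1 z \<noteq> 0" and q2: "poly Q2 z \<noteq> 0" using nz pq by auto
    have QQ: "poly_over k (Q1 * Q2)" "Q1 * Q2 \<noteq> 0" using pq poly_over_mult[OF sf] by auto
    show "a + b \<in> ratset k z"
    proof (rule ratsetI[OF _ QQ])
      show "poly_over k (P1 * Q2 + P2 * Q1)" using pq poly_over_mult[OF sf] poly_over_add[OF sf] by metis
      show "a + b = poly (P1 * Q2 + P2 * Q1) z / poly (Q1 * Q2) z" unfolding pq(1,5)
        using q1 q2 by (simp add: field_simps)
    qed
    show "a - b \<in> ratset k z"
    proof (rule ratsetI[OF _ QQ])
      show "poly_over k (P1 * Q2 - P2 * Q1)" using pq poly_over_mult[OF sf] poly_over_diff[OF sf] by metis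
      show "a - b = poly (P1 * Q2 - P2 * Q1) z / poly (Q1 * Q2) z" unfolding pq(1,5)
        using q1 q2 by (simp add: field_simps)
    qed
    show "a * b \<in> ratset k z"
    proof (rule ratsetI[OF _ QQ])
      show "poly_over k (P1 * P2)" using pq poly_over_mult[OF sf] by metis
      show "a * b = poly (P1 * P2) z / poly (Q1 * Q2) z" unfolding pq(1,5)
        using q1 q2 by (simp add: field_simps)
    qed
  next
    fix a assume a: "a \<in> ratset k z"
    then obtain P1 Q1 where pq: "a = poly P1 z / poly Q1 z" "poly_over k P1" "poly_over k Q1" "Q1 \<noteq> 0"
      unfolding ratset_def by blast
    show "inverse a \<in> ratset k z"
    proof (cases "P1 = 0")
      case True
      show ?thesis by (rule ratsetI[OF p0 p1]) (simp_all add: pq True)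
    next
      case False
      show ?thesis by (rule ratsetI[OF pq(3,2) False]) (simp add: pq)
    qed
  qed
qed

lemma ratset_poly: "is_subfield k \<Longrightarrow> poly_over k P \<Longrightarrow> poly P z \<in> ratset k z"
  by (rule ratsetI[of k P 1]) (simp_all add: poly_over_1)

lemma ratset_k: "is_subfield k \<Longrightarrow> c \<in> k \<Longrightarrow> c \<in> ratset k z"
  using ratset_poly[of k "[:c:]" z] poly_over_const by fastforce

lemma ratset_z: "is_subfield k \<Longrightarrow> z \<in> ratset k z"
  using ratset_poly[of k "[:0,1:]" z] poly_over_X by fastforce

lemma ratset_fix: "g \<in> Aut k \<Longrightarrow> g z = z \<Longrightarrow> a \<in> ratset k z \<Longrightarrow> g a = a"
  unfolding ratset_def by (auto simp: aut_divide aut_poly)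

lemma prim_pos: "primitive_root n \<xi> \<Longrightarrow> \<xi> ^ n = 1"
  unfolding primitive_root_def by simp

lemma prim_pow_eq1:
  assumes "primitive_root n \<xi>" "n > 0" shows "\<xi> ^ a = 1 \<longleftrightarrow> n dvd a"
proof -
  have xn: "\<xi> ^ n = 1" using assms unfolding primitive_root_def by simp
  have "\<xi> ^ a = \<xi> ^ (n * (a div n) + a mod n)" by simp
  also have "\<dots> = (\<xi> ^ n) ^ (a div n) * \<xi> ^ (a mod n)" by (simp only: power_add power_mult)
  finally have e: "\<xi> ^ a = \<xi> ^ (a mod n)" using xn by simp
  have lt: "a mod n < n" using assms(2) by simp
  show ?thesis
  proof
    assume "\<xi> ^ a = 1"
    then have "\<xi> ^ (a mod n) = 1" using e by simp
    then have "a mod n = 0" using assms(1) lt unfolding primitive_root_def by auto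
    then show "n dvd a" by auto
  next
    assume "n dvd a" then show "\<xi> ^ a = 1" using e by simp
  qed
qed

lemma sum_if_eq: "(\<Sum>i<(n::nat). if i = m then c else 0) = (if m < n then c else (0::'a::comm_monoid_add))"
  by (induction n) auto

lemma sum_single: "m < n \<Longrightarrow> (\<Sum>i<(n::nat). (if i = m then C else 0) * w i) = C * (w m :: 'a::comm_ring_1)"
proof -
  assume "m < n"
  have "(\<Sum>i<n. (if i = m then C else 0) * w i) = (\<Sum>i<n. if i = m then C * w m else 0)"
    by (rule sum.cong) auto
  also have "\<dots> = C * w m" using \<open>m < n\<close> sum_if_eq[where c="C * w m" and n=n and m=m] by simp
  finally show ?thesis .
qed


locale sdata =
  fixes k :: "'a::field set" and n :: nat and x y :: 'a and F :: "'a poly" and \<xi> :: 'a and s :: "'a \<Rightarrow> 'a"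
  assumes ac: "alg_closed_subfield k"
    and model: "superelliptic_model k n x y F"
    and xi: "\<xi> \<in> k" and prim: "primitive_root n \<xi>"
    and sA: "s \<in> Aut k" and sx: "s x = x" and sy: "s y = \<xi> * y"
begin

lemma sf: "is_subfield k" using ac alg_closed_subfield by blast
lemma n2: "n \<ge> 2" using model unfolding superelliptic_model_def by auto
lemma tx: "transcendental_over k x" using model unfolding superelliptic_model_def by auto
lemma gen: "field_gen k {x, y} = UNIV" using model unfolding superelliptic_model_def by auto
lemma Fk: "poly_over k F" using model unfolding superelliptic_model_def by auto
lemma yF: "y ^ n = poly F x" using model unfolding superelliptic_model_def by auto
lemma xin: "\<xi> ^ n = 1" using prim unfolding primitive_root_def by auto
lemma nz: "(of_nat n :: 'a) \<noteq> 0" using prim_n_nonzero[OF prim] n2 by auto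

abbreviation "Kx \<equiv> ratset k x"
lemma Ksf: "is_subfield Kx" using ratset_subfield[OF sf tx] .
lemma kK: "c \<in> k \<Longrightarrow> c \<in> Kx" using ratset_k[OF sf] .
lemma FK: "poly F x \<in> Kx" using ratset_poly[OF sf Fk] .

definition "R = {z. \<exists>a. (\<forall>i. a i \<in> Kx) \<and> z = (\<Sum>i<n. a i * y ^ i)}"

lemma RI: "(\<And>i. a i \<in> Kx) \<Longrightarrow> (\<Sum>i<n. a i * y ^ i) \<in> R"
  unfolding R_def by blast

lemma y_pow: "y ^ j = poly F x ^ (j div n) * y ^ (j mod n)"
proof -
  have "y ^ j = y ^ (n * (j div n) + j mod n)" by simp
  also have "\<dots> = (y ^ n) ^ (j div n) * y ^ (j mod n)" by (simp only: power_add power_mult)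
  finally show ?thesis using yF by simp
qed

lemma R_term: assumes "c \<in> Kx" shows "c * y ^ j \<in> R"
proof -
  let ?C = "c * poly F x ^ (j div n)"
  have C: "?C \<in> Kx" using assms FK Ksf by (auto intro: subfieldD subfield_power)
  have jm: "j mod n < n" using n2 by simp
  have "(\<Sum>i<n. (if i = j mod n then ?C else 0) * y ^ i) = ?C * y ^ (j mod n)"
    by (rule sum_single[OF jm])
  also have "\<dots> = c * y ^ j" unfolding y_pow[of j] by (simp add: mult.assoc)
  moreover have "(\<Sum>i<n. (if i = j mod n then ?C else 0) * y ^ i) \<in> R"
    by (rule RI) (use C subfieldD(1)[OF Ksf] in auto)
  ultimately show ?thesis by simp
qed

lemma R_zero: "0 \<in> R" using R_term[of 0 0] subfieldD(1)[OF Ksf] by simp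

lemma R_add: assumes "z1 \<in> R" "z2 \<in> R" shows "z1 + z2 \<in> R"
proof -
  obtain a b where ab: "\<forall>i. a i \<in> Kx" "z1 = (\<Sum>i<n. a i * y ^ i)" "\<forall>i. b i \<in> Kx" "z2 = (\<Sum>i<n. b i * y ^ i)"
    using assms unfolding R_def by blast
  then have "z1 + z2 = (\<Sum>i<n. (a i + b i) * y ^ i)"
    by (simp add: sum.distrib distrib_right)
  moreover have "(\<Sum>i<n. (a i + b i) * y ^ i) \<in> R"
    by (rule RI) (use ab in \<open>auto intro: subfieldD(3)[OF Ksf]\<close>)
  ultimately show ?thesis by simp
qed

lemma R_uminus: assumes "z1 \<in> R" shows "- z1 \<in> R"
proof -
  obtain a where "\<forall>i. a i \<in> Kx" "z1 = (\<Sum>i<n. a i * y ^ i)"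
    using assms unfolding R_def by blast
  then have "- z1 = (\<Sum>i<n. (- a i) * y ^ i)"
    by (simp add: sum_negf)
  moreover have "(\<Sum>i<n. (- a i) * y ^ i) \<in> R"
    by (rule RI) (use \<open>\<forall>i. a i \<in> Kx\<close> in \<open>auto intro: subfield_uminus[OF Ksf]\<close>)
  ultimately show ?thesis by simp
qed

lemma R_sum: "(\<And>i. i \<in> A \<Longrightarrow> f i \<in> R) \<Longrightarrow> sum f A \<in> R"
  by (induction A rule: infinite_finite_induct) (auto intro: R_add R_zero)

lemma R_mult: assumes "z1 \<in> R" "z2 \<in> R" shows "z1 * z2 \<in> R"
proof -
  obtain a b where ab: "\<forall>i. a i \<in> Kx" "z1 = (\<Sum>i<n. a i * y ^ i)" "\<forall>i. b i \<in> Kx" "z2 = (\<Sum>i<n. b i * y ^ i)"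
    using assms unfolding R_def by blast
  have "z1 * z2 = (\<Sum>i<n. \<Sum>j<n. (a i * b j) * y ^ (i + j))"
    unfolding ab(2,4) sum_product by (simp add: power_add algebra_simps)
  moreover have "(\<Sum>i<n. \<Sum>j<n. (a i * b j) * y ^ (i + j)) \<in> R"
    using ab by (intro R_sum R_term subfieldD(5)[OF Ksf]) auto
  ultimately show ?thesis by simp
qed

lemma R_one: "1 \<in> R" using R_term[of 1 0] subfieldD(2)[OF Ksf] by simp

lemma R_prod: "(\<And>i. i \<in> A \<Longrightarrow> f i \<in> R) \<Longrightarrow> prod f A \<in> R"
  by (induction A rule: infinite_finite_induct) (auto intro: R_mult R_one)

lemma act:
  assumes "g \<in> Aut k" "g x = x" "g y = c * y" "\<forall>i. a i \<in> Kx"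
  shows "g (\<Sum>i<n. a i * y ^ i) = (\<Sum>i<n. a i * c ^ i * y ^ i)"
  using assms by (simp add: aut_sum AutD(3) aut_power ratset_fix power_mult_distrib mult.assoc)

lemma spow: "s ^^ l \<in> Aut k" "(s ^^ l) x = x" "(s ^^ l) y = \<xi> ^ l * y"
proof -
  show "s ^^ l \<in> Aut k" using aut_funpow[OF sA] .
  show "(s ^^ l) x = x" by (induction l) (auto simp: sx)
  show "(s ^^ l) y = \<xi> ^ l * y"
    by (induction l) (auto simp: sy AutD(3)[OF sA] AutD(5)[OF sA] xi sf subfield_power)
qed

lemma geom:
  assumes "i < n" "m < n"
  shows "(\<Sum>l<n. (\<xi> ^ (i + n - m)) ^ l) = (if i = m then of_nat n else 0)"
proof (cases "i = m")
  case True
  then show ?thesis using xin by simp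
next
  case False
  let ?c = "\<xi> ^ (i + n - m)"
  have "\<not> n dvd (i + n - m)"
  proof
    assume d: "n dvd (i + n - m)"
    have "0 < i + n - m" "i + n - m < 2 * n" "i + n - m \<noteq> n" using assms False by auto
    moreover obtain q where q: "i + n - m = n * q" using d by (auto elim: dvdE)
    ultimately have "n * q < n * 2" "0 < n * q" "n * q \<noteq> n * 1" by (auto simp: mult.commute)
    then have "q < 2" "0 < q" "q \<noteq> 1" by (simp_all only: mult_less_cancel1 nat_0_less_mult_iff mult_cancel1) auto
    then show False by simp
  qed
  then have c1: "?c \<noteq> 1" using prim_pow_eq1[OF prim] n2 by auto
  have "?c ^ n = (\<xi> ^ n) ^ (i + n - m)" by (simp only: power_mult[symmetric] mult.commute)
  then have "?c ^ n = 1" using xin by simp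
  then show ?thesis using sum_gp_strict[of ?c n] c1 False by simp
qed

lemma avg:
  assumes a: "\<forall>i. a i \<in> Kx" and m: "m < n"
  shows "(\<Sum>l<n. \<xi> ^ ((n - m) * l) * (s ^^ l) (\<Sum>i<n. a i * y ^ i)) = of_nat n * (a m * y ^ m)"
proof -
  have "(\<Sum>l<n. \<xi> ^ ((n - m) * l) * (s ^^ l) (\<Sum>i<n. a i * y ^ i))
      = (\<Sum>l<n. \<xi> ^ ((n - m) * l) * (\<Sum>i<n. a i * (\<xi> ^ l) ^ i * y ^ i))"
    using act[OF spow(1,2,3) a] by simp
  also have "\<dots> = (\<Sum>l<n. \<Sum>i<n. a i * y ^ i * (\<xi> ^ (i + n - m)) ^ l)"
  proof (rule sum.cong[OF refl], unfold sum_distrib_left, rule sum.cong[OF refl])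
    fix l i assume "i \<in> {..<n}"
    have "(\<xi> ^ (i + n - m)) ^ l = \<xi> ^ ((n - m) * l) * (\<xi> ^ l) ^ i"
      using m by (simp add: power_mult[symmetric] power_add[symmetric] algebra_simps)
    then show "\<xi> ^ ((n - m) * l) * (a i * (\<xi> ^ l) ^ i * y ^ i) = a i * y ^ i * (\<xi> ^ (i + n - m)) ^ l"
      by simp
  qed
  also have "\<dots> = (\<Sum>i<n. a i * y ^ i * (\<Sum>l<n. (\<xi> ^ (i + n - m)) ^ l))"
    by (subst sum.swap) (simp add: sum_distrib_left)
  also have "\<dots> = (\<Sum>i<n. (if i = m then of_nat n * a m else 0) * y ^ i)"
    by (rule sum.cong[OF refl]) (simp add: geom m)
  also have "\<dots> = of_nat n * (a m * y ^ m)" using sum_single[OF m, of "of_nat n * a m" "\<lambda>i. y ^ i"] by (simp add: mult.assoc)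
  finally show ?thesis .
qed

lemma eig_R:
  assumes z: "z \<in> R" and m: "m < n" and ev: "s z = \<xi> ^ m * z"
  shows "\<exists>a\<in>Kx. z = a * y ^ m"
proof -
  obtain a where a: "\<forall>i. a i \<in> Kx" "z = (\<Sum>i<n. a i * y ^ i)" using z unfolding R_def by blast
  have it: "(s ^^ l) z = \<xi> ^ (m * l) * z" for l
  proof (induction l)
    case (Suc l)
    have "\<xi> ^ (m * l) \<in> k" using xi sf subfield_power by blast
    then show ?case using Suc ev by (simp add: AutD(3)[OF sA] AutD(5)[OF sA] power_add algebra_simps)
  qed simp
  have "(\<Sum>l<n. \<xi> ^ ((n - m) * l) * (s ^^ l) z) = (\<Sum>l<n. z)"
  proof (rule sum.cong[OF refl])
    fix l
    have "\<xi> ^ ((n - m) * l) * \<xi> ^ (m * l) = (\<xi> ^ n) ^ l"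
      using m by (simp add: power_add[symmetric] power_mult[symmetric] algebra_simps)
    then show "\<xi> ^ ((n - m) * l) * (s ^^ l) z = z" using it xin by simp
  qed
  moreover have "(\<Sum>l<n. \<xi> ^ ((n - m) * l) * (s ^^ l) z) = of_nat n * (a m * y ^ m)"
    using avg[OF a(1) m] unfolding a(2)[symmetric] .
  moreover have "(\<Sum>l<n. z) = of_nat n * z" by simp
  ultimately have "of_nat n * z = of_nat n * (a m * y ^ m)" by metis
  then have "z = a m * y ^ m" using nz by simp
  then show ?thesis using a by blast
qed

lemma R_act: assumes "z \<in> R" shows "(s ^^ l) z \<in> R"
proof -
  obtain a where a: "\<forall>i. a i \<in> Kx" "z = (\<Sum>i<n. a i * y ^ i)" using assms unfolding R_def by blast
  have "(s ^^ l) z = (\<Sum>i<n. (a i * (\<xi> ^ l) ^ i) * y ^ i)" using act[OF spow a(1)] a(2) by simp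
  moreover have "\<forall>i. a i * (\<xi> ^ l) ^ i \<in> Kx" using a(1) xi kK Ksf
    by (auto intro!: subfieldD(5)[OF Ksf] subfield_power[OF Ksf])
  ultimately show ?thesis using RI by simp
qed

lemma R_period: assumes "z \<in> R" shows "(s ^^ n) z = z"
proof -
  obtain a where a: "\<forall>i. a i \<in> Kx" "z = (\<Sum>i<n. a i * y ^ i)" using assms unfolding R_def by blast
  have "(s ^^ n) z = (\<Sum>i<n. a i * (\<xi> ^ n) ^ i * y ^ i)" using act[OF spow a(1)] a(2) by simp
  then show ?thesis using xin a(2) by simp
qed

lemma R_inverse: assumes z: "z \<in> R" shows "inverse z \<in> R"
proof (cases "z = 0")
  case True then show ?thesis using R_zero by simp
next
  case False
  obtain n' where n': "n = Suc n'" using n2 by (cases n) auto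
  define N where "N = (\<Prod>l<n. (s ^^ l) z)"
  have NR: "N \<in> R" unfolding N_def using R_act[OF z] by (intro R_prod)
  have "s N = (\<Prod>l<n. (s ^^ Suc l) z)" unfolding N_def by (simp add: aut_prod[OF sA])
  also have "\<dots> = N"
  proof -
    have "(\<Prod>l<Suc n'. (s ^^ l) z) = (\<Prod>l<n'. (s ^^ l) z) * (s ^^ n') z" by simp
    have "(\<Prod>l<Suc n'. (s ^^ Suc l) z) = (\<Prod>l<Suc (Suc n'). (s ^^ l) z) / z"
      using False by (subst prod.lessThan_Suc_shift) simp
    also have "\<dots> = (\<Prod>l<Suc n'. (s ^^ l) z) * (s ^^ Suc n') z / z" by simp
    also have "\<dots> = (\<Prod>l<Suc n'. (s ^^ l) z)" using R_period[OF z] n' False by simp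
    finally show ?thesis unfolding N_def n' .
  qed
  finally have sN: "s N = \<xi> ^ 0 * N" by simp
  obtain c where c: "c \<in> Kx" "N = c * y ^ 0" using eig_R[OF NR _ sN] n2 by auto
  have Nz: "N \<noteq> 0" unfolding N_def using False aut_eq0[OF spow(1)] by simp
  define M where "M = (\<Prod>l<n'. (s ^^ Suc l) z)"
  have MR: "M \<in> R" unfolding M_def using R_act[OF z] by (intro R_prod)
  have NM: "N = z * M" unfolding N_def M_def n' by (subst prod.lessThan_Suc_shift) simp
  have "inverse z = M * inverse N" using NM Nz False by (simp add: field_simps)
  moreover have "inverse N \<in> R" using R_term[of "inverse N" 0] c subfieldD(6)[OF Ksf] by simp
  ultimately show ?thesis using R_mult MR by simp
qed

lemma R_UNIV: "R = UNIV"
proof -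
  have "is_subfield R" unfolding is_subfield_def
  proof (intro conjI ballI)
    show "0 \<in> R" by (rule R_zero)
    show "1 \<in> R" by (rule R_one)
  next
    fix a b assume "a \<in> R" "b \<in> R"
    show "a + b \<in> R" using R_add[OF \<open>a \<in> R\<close> \<open>b \<in> R\<close>] .
    show "a * b \<in> R" using R_mult[OF \<open>a \<in> R\<close> \<open>b \<in> R\<close>] .
    show "a - b \<in> R" using R_add[OF \<open>a \<in> R\<close> R_uminus[OF \<open>b \<in> R\<close>]] by simp
  next
    fix a assume "a \<in> R" then show "inverse a \<in> R" by (rule R_inverse)
  qed
  moreover have "k \<union> {x, y} \<subseteq> R"
  proof -
    have "c \<in> R" if "c \<in> k" for c using R_term[of c 0] kK[OF that] by simp
    moreover have "x \<in> R" using R_term[of x 0] ratset_z[OF sf] by simp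
    moreover have "y \<in> R" using R_term[of 1 1] subfieldD(2)[OF Ksf] by simp
    ultimately show ?thesis by blast
  qed
  ultimately show ?thesis using field_gen_UNIV[OF gen] by blast
qed

lemma eig:
  assumes m: "m < n" and ev: "s z = \<xi> ^ m * z"
  shows "\<exists>P Q. poly_over k P \<and> poly_over k Q \<and> Q \<noteq> 0 \<and> z = poly P x / poly Q x * y ^ m"
  using eig_R[OF _ m ev] R_UNIV unfolding ratset_def by blast

end


definition hom :: "'a::field poly \<Rightarrow> 'a poly \<Rightarrow> 'a poly \<Rightarrow> nat \<Rightarrow> 'a poly" where
  "hom G P Q e = (\<Sum>i\<le>e. smult (coeff G i) (P ^ i * Q ^ (e - i)))"

lemma smult_sum_right: "smult c (sum f A) = (\<Sum>i\<in>A. smult c (f i))"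
  by (induction A rule: infinite_finite_induct) (auto simp: smult_add_right)

lemma hom_over: "is_subfield k \<Longrightarrow> poly_over k G \<Longrightarrow> poly_over k P \<Longrightarrow> poly_over k Q \<Longrightarrow> poly_over k (hom G P Q e)"
  unfolding hom_def
  by (intro poly_over_sum poly_over_smult poly_over_mult poly_over_power poly_over_coeff) auto

lemma poly_sum_le: "degree (G::'a::field poly) \<le> e \<Longrightarrow> poly G w = (\<Sum>i\<le>e. coeff G i * w ^ i)"
  unfolding poly_altdef
  by (rule sum.mono_neutral_left) (auto simp: coeff_eq_0)

lemma hom_eval:
  assumes "degree G \<le> e" "poly Q z \<noteq> 0"
  shows "poly (hom G P Q e) z = poly Q z ^ e * poly G (poly P z / poly Q z)"
proof -
  have "poly (hom G P Q e) z = (\<Sum>i\<le>e. coeff G i * (poly P z ^ i * poly Q z ^ (e - i)))"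
    unfolding hom_def by (simp add: poly_sum)
  also have "\<dots> = (\<Sum>i\<le>e. poly Q z ^ e * (coeff G i * (poly P z / poly Q z) ^ i))"
  proof (rule sum.cong[OF refl])
    fix i assume "i \<in> {..e}"
    then have "poly Q z ^ e = poly Q z ^ i * poly Q z ^ (e - i)"
      by (simp add: power_add[symmetric])
    then show "coeff G i * (poly P z ^ i * poly Q z ^ (e - i)) = poly Q z ^ e * (coeff G i * (poly P z / poly Q z) ^ i)"
      using assms(2) by (simp add: power_divide field_simps)
  qed
  also have "\<dots> = poly Q z ^ e * poly G (poly P z / poly Q z)"
    by (simp add: poly_sum_le[OF assms(1)] sum_distrib_left)
  finally show ?thesis .
qed

lemma hom_pole:
  assumes "poly Q r = 0"
  shows "poly (hom G P Q e) r = coeff G e * poly P r ^ e"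
proof -
  have "poly (hom G P Q e) r = (\<Sum>i\<le>e. coeff G i * (poly P r ^ i * poly Q r ^ (e - i)))"
    unfolding hom_def by (simp add: poly_sum)
  also have "\<dots> = (\<Sum>i\<le>e. if i = e then coeff G e * poly P r ^ e else 0)"
    by (rule sum.cong[OF refl]) (auto simp: assms)
  also have "\<dots> = coeff G e * poly P r ^ e" by simp
  finally show ?thesis .
qed

lemma hom_linear: "hom (G1 - smult r G2) P Q e = hom G1 P Q e - smult r (hom G2 P Q e)"
  unfolding hom_def smult_sum_right
  by (simp add: smult_diff_left sum_subtractf)

lemma hom_factor:
  assumes sf: "is_subfield k" and tx: "transcendental_over k x"
    and G: "poly_over k G" and P: "poly_over k P" and Q: "poly_over k Q" "Q \<noteq> 0" and t: "t \<in> k"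
    and e: "e \<ge> 1" "degree G \<le> e - 1"
  shows "hom ([:-t,1:] * G) P Q e = (P - smult t Q) * hom G P Q (e - 1)"
proof -
  have q: "poly Q x \<noteq> 0" using tx Q transc_nonzero by blast
  have dg: "degree ([:-t,1:] * G) \<le> e"
  proof (cases "G = 0")
    case False
    then have "degree ([:-t,1:] * G) = 1 + degree G" by (subst degree_mult_eq) auto
    then show ?thesis using e by simp
  qed simp
  have lin: "poly_over k [:-t,1:]" using sf t by (auto intro!: poly_over_pCons subfield_uminus subfieldD poly_over_0)
  show ?thesis
  proof (rule transc_poly_eq[OF tx sf])
    show "poly_over k (hom ([:-t,1:] * G) P Q e)" using sf lin G P Q by (intro hom_over poly_over_mult)
    show "poly_over k ((P - smult t Q) * hom G P Q (e - 1))" using sf lin G P Q t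
      by (intro hom_over poly_over_mult poly_over_diff poly_over_smult)
    have qe: "poly Q x ^ e = poly Q x * poly Q x ^ (e - 1)" using e by (cases e) auto
    have h1: "poly (hom ([:-t,1:] * G) P Q e) x = poly Q x ^ e * poly ([:-t,1:] * G) (poly P x / poly Q x)"
      by (rule hom_eval[OF dg q])
    have h2: "poly (hom G P Q (e - 1)) x = poly Q x ^ (e - 1) * poly G (poly P x / poly Q x)"
      by (rule hom_eval[OF e(2) q])
    have "poly Q x * (poly P x / poly Q x - t) = poly P x - t * poly Q x" using q by (simp add: field_simps)
    then show "poly (hom ([:-t,1:] * G) P Q e) x = poly ((P - smult t Q) * hom G P Q (e - 1)) x"
      unfolding h1 poly_mult h2 qe by (simp add: algebra_simps q)
  qed
qed

lemma order_power: "p \<noteq> 0 \<Longrightarrow> order a (p ^ m) = m * order a p"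
  by (induction m) (auto simp: order_mult)


lemma lin_over: "is_subfield k \<Longrightarrow> t \<in> k \<Longrightarrow> poly_over k [:-t,1:]"
  by (auto intro!: poly_over_pCons subfield_uminus subfieldD poly_over_0)

lemma order_lin: "order r [:-r,1:] = 1"
  using order_power_n_n[of r 1] by simp

lemma key_poly:
  fixes k :: "'a::field set"
  assumes ac: "alg_closed_subfield k" and tx: "transcendental_over k x"
    and Fk: "poly_over k F" and sqF: "rsquarefree F" and dF: "degree F \<ge> 2"
    and vrep: "\<exists>P Q. poly_over k P \<and> poly_over k Q \<and> Q \<noteq> 0 \<and> v = poly P x / poly Q x"
    and xrep: "\<exists>C D. poly_over k C \<and> poly_over k D \<and> poly D v \<noteq> 0 \<and> x = poly C v / poly D v"
    and urep: "\<exists>A B. poly_over k A \<and> poly_over k B \<and> B \<noteq> 0 \<and> u = poly A x / poly B x * y ^ m"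
    and u0: "u \<noteq> 0" and yF: "y ^ n = poly F x" and uF: "u ^ n = poly F v" and vk: "v \<notin> k" and mn: "m < n"
  shows "m \<le> 1"
proof -
  have sf: "is_subfield k" using ac alg_closed_subfield by blast
  have xk: "x \<notin> k" using transc_notin[OF tx sf] .
  define RP where "RP = (\<lambda>pq. poly_over k (fst pq) \<and> poly_over k (snd pq) \<and> snd pq \<noteq> 0 \<and> v = poly (fst pq) x / poly (snd pq) x)"
  obtain pq0 where "RP pq0" using vrep unfolding RP_def by auto
  then obtain pq where pq: "RP pq" and pqmin: "\<forall>pq'. RP pq' \<longrightarrow> degree (snd pq) \<le> degree (snd pq')"
    using ex_has_least_nat[of RP pq0 "\<lambda>pq. degree (snd pq)"] by blast
  define P where "P = fst pq"
  define Q where "Q = snd pq"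
  have PQ: "poly_over k P" "poly_over k Q" "Q \<noteq> 0" "v = poly P x / poly Q x"
    using pq unfolding RP_def P_def Q_def by auto
  have qx: "poly Q x \<noteq> 0" using transc_nonzero[OF tx PQ(2,3)] .
  have noPQ: "poly P r \<noteq> 0" if r: "r \<in> k" "poly Q r = 0" for r
  proof
    assume pr: "poly P r = 0"
    obtain P1 where P1: "poly_over k P1" "P = [:-r,1:] * P1" using poly_over_factor[OF sf PQ(1) r(1) pr] by blast
    obtain Q1 where Q1: "poly_over k Q1" "Q = [:-r,1:] * Q1" using poly_over_factor[OF sf PQ(2) r] by blast
    have "Q1 \<noteq> 0" using Q1 PQ(3) by auto
    have xr: "x - r \<noteq> 0" using xk r by auto
    have "v = ((x - r) * poly P1 x) / ((x - r) * poly Q1 x)" using PQ(4) unfolding P1(2) Q1(2) by (simp add: algebra_simps)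
    then have "v = poly P1 x / poly Q1 x" by (simp only: mult_divide_mult_cancel_left[OF xr])
    then have "RP (P1, Q1)" unfolding RP_def using P1 Q1 \<open>Q1 \<noteq> 0\<close> by simp
    then have "degree Q \<le> degree Q1" using pqmin unfolding Q_def by fastforce
    moreover have "degree Q = 1 + degree Q1" unfolding Q1(2) using \<open>Q1 \<noteq> 0\<close> by (subst degree_mult_eq) auto
    ultimately show False by simp
  qed
  define RC where "RC = (\<lambda>cd. poly_over k (fst cd) \<and> poly_over k (snd cd) \<and> poly (snd cd) v \<noteq> 0 \<and> x = poly (fst cd) v / poly (snd cd) v)"
  obtain cd0 where "RC cd0" using xrep unfolding RC_def by auto
  then obtain cd where cd: "RC cd" and cdmin: "\<forall>cd'. RC cd' \<longrightarrow> degree (snd cd) \<le> degree (snd cd')"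
    using ex_has_least_nat[of RC cd0 "\<lambda>cd. degree (snd cd)"] by blast
  define C where "C = fst cd"
  define D where "D = snd cd"
  have CD: "poly_over k C" "poly_over k D" "poly D v \<noteq> 0" "x = poly C v / poly D v"
    using cd unfolding RC_def C_def D_def by auto
  have Dnz: "D \<noteq> 0" using CD(3) by auto
  have noCD: "poly D t \<noteq> 0" if t: "t \<in> k" "poly C t = 0" for t
  proof
    assume dt: "poly D t = 0"
    obtain C1 where C1: "poly_over k C1" "C = [:-t,1:] * C1" using poly_over_factor[OF sf CD(1) t] by blast
    obtain D1 where D1: "poly_over k D1" "D = [:-t,1:] * D1" using poly_over_factor[OF sf CD(2) t(1) dt] by blast
    have vt: "v - t \<noteq> 0" using vk t by auto
    have d1: "poly D1 v \<noteq> 0" using CD(3) unfolding D1(2) by simp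
    have "x = ((v - t) * poly C1 v) / ((v - t) * poly D1 v)" using CD(4) unfolding C1(2) D1(2) by (simp add: algebra_simps)
    then have "x = poly C1 v / poly D1 v" by (simp only: mult_divide_mult_cancel_left[OF vt])
    then have "RC (C1, D1)" unfolding RC_def using C1 D1 d1 by simp
    then have "degree D \<le> degree D1" using cdmin unfolding D_def by fastforce
    moreover have "D1 \<noteq> 0" using d1 by auto
    then have "degree D = 1 + degree D1" unfolding D1(2) by (subst degree_mult_eq) auto
    ultimately show False by simp
  qed
  define e where "e = max (degree C) (degree D)"
  have Ce: "degree C \<le> e" and De: "degree D \<le> e" unfolding e_def by auto
  have e1: "e \<ge> 1"
  proof (rule ccontr)
    assume "\<not> e \<ge> 1"
    then have "degree C = 0" "degree D = 0" unfolding e_def by auto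
    then have "poly C v = coeff C 0" "poly D v = coeff D 0" by (auto simp: poly_altdef)
    then have "x = coeff C 0 / coeff D 0" using CD(4) by simp
    then have "x \<in> k" using CD(1,2) sf by (simp add: poly_over_coeff subfield_divide)
    then show False using xk by simp
  qed
  have Hx: "[:0,1:] * hom D P Q e = hom C P Q e"
  proof (rule transc_poly_eq[OF tx sf])
    show "poly_over k ([:0,1:] * hom D P Q e)" using sf PQ CD by (intro poly_over_mult poly_over_X hom_over)
    show "poly_over k (hom C P Q e)" using sf PQ CD by (intro hom_over)
    have "poly ([:0,1:] * hom D P Q e) x = x * (poly Q x ^ e * poly D v)"
      using hom_eval[OF De qx] PQ(4) by simp
    also have "\<dots> = poly Q x ^ e * poly C v" using CD(3,4) by (simp add: field_simps)
    also have "\<dots> = poly (hom C P Q e) x" using hom_eval[OF Ce qx] PQ(4) by simp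
    finally show "poly ([:0,1:] * hom D P Q e) x = poly (hom C P Q e) x" .
  qed
  have F0: "F \<noteq> 0" using sqF unfolding rsquarefree_def by simp
  obtain r1 where r1: "r1 \<in> k" "poly F r1 = 0" using ac Fk dF unfolding alg_closed_subfield_def by auto
  obtain F1 where F1: "poly_over k F1" "F = [:-r1,1:] * F1" using poly_over_factor[OF sf Fk r1] by blast
  have F1nz: "F1 \<noteq> 0" using F0 F1 by auto
  have "degree F = 1 + degree F1" unfolding F1(2) using F1nz by (subst degree_mult_eq) auto
  then obtain r2 where r2: "r2 \<in> k" "poly F1 r2 = 0" using ac F1 dF unfolding alg_closed_subfield_def by auto
  have r12: "r1 \<noteq> r2"
  proof
    assume "r1 = r2"
    then have "order r1 F1 \<ge> 1" using r2 F1nz order_root by (metis less_one not_le)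
    moreover have "order r1 F = 1 + order r1 F1"
    proof -
      have nz: "[:-r1,1:] * F1 \<noteq> 0" using F0 unfolding F1(2) .
      show ?thesis unfolding F1(2) order_mult[OF nz] order_lin ..
    qed
    moreover have "order r1 F = 1" using rsquarefree_root_order[OF sqF r1(2) F0] .
    ultimately show False by simp
  qed
  have Fr2: "poly F r2 = 0" using r2 F1 by simp
  have pole: "r * coeff D e = coeff C e" if r: "r \<in> k" "poly Q r = 0" for r
  proof -
    have "poly ([:0,1:] * hom D P Q e) r = poly (hom C P Q e) r" using Hx by simp
    then have "r * (coeff D e * poly P r ^ e) = coeff C e * poly P r ^ e"
      using hom_pole[OF r(2)] by simp
    moreover have "poly P r ^ e \<noteq> 0" using noPQ[OF r] by simp
    ultimately show ?thesis by (metis mult.assoc mult_right_cancel)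
  qed
  have lc: "coeff C e \<noteq> 0 \<or> coeff D e \<noteq> 0"
  proof (cases "degree C \<le> degree D")
    case True
    then have "e = degree D" unfolding e_def by simp
    then show ?thesis using Dnz by simp
  next
    case False
    then have "e = degree C" "C \<noteq> 0" unfolding e_def by auto
    then show ?thesis by simp
  qed
  obtain r where r: "r \<in> k" "poly F r = 0" "poly Q r \<noteq> 0"
  proof -
    have "poly Q r1 \<noteq> 0 \<or> poly Q r2 \<noteq> 0"
    proof (rule ccontr)
      assume "\<not> ?thesis"
      then have "r1 * coeff D e = coeff C e" "r2 * coeff D e = coeff C e" using pole r1 r2 by auto
      then have "(r1 - r2) * coeff D e = 0" by (simp add: algebra_simps)
      then have "coeff D e = 0" using r12 by simp
      then show False using lc \<open>r1 * coeff D e = coeff C e\<close> by simp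
    qed
    then show ?thesis using that r1 r2 Fr2 by blast
  qed
  define t where "t = poly P r / poly Q r"
  have tk: "t \<in> k" unfolding t_def using sf PQ r by (intro subfield_divide poly_over_poly)
  define L where "L = P - smult t Q"
  have Lk: "poly_over k L" unfolding L_def using sf PQ tk by (intro poly_over_diff poly_over_smult)
  have Lr: "poly L r = 0" unfolding L_def t_def using r(3) by simp
  have Lnz: "L \<noteq> 0"
  proof
    assume "L = 0"
    then have "P = smult t Q" unfolding L_def by simp
    then have "v = t" using PQ(4) qx by simp
    then show False using vk tk by simp
  qed
  have hDr: "poly (hom D P Q e) r = poly Q r ^ e * poly D t" unfolding t_def by (rule hom_eval[OF De r(3)])
  have hCr: "poly (hom C P Q e) r = poly Q r ^ e * poly C t" unfolding t_def by (rule hom_eval[OF Ce r(3)])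
  have Ct: "poly C t = r * poly D t"
  proof -
    have "poly ([:0,1:] * hom D P Q e) r = poly (hom C P Q e) r" using Hx by simp
    then have "r * (poly Q r ^ e * poly D t) = poly Q r ^ e * poly C t" using hDr hCr by simp
    then show ?thesis using r(3) by (simp add: field_simps)
  qed
  have Dt: "poly D t \<noteq> 0"
  proof
    assume "poly D t = 0"
    then have "poly C t = 0" using Ct by simp
    then show False using noCD[OF tk] \<open>poly D t = 0\<close> by simp
  qed
  define G0 where "G0 = C - smult r D"
  have G0k: "poly_over k G0" unfolding G0_def using sf CD r by (intro poly_over_diff poly_over_smult)
  have G0t: "poly G0 t = 0" unfolding G0_def using Ct by simp
  obtain G1 where G1: "poly_over k G1" "G0 = [:-t,1:] * G1" using poly_over_factor[OF sf G0k tk G0t] by blast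
  have dG0: "degree G0 \<le> e" unfolding G0_def
    using degree_diff_le_max[of C "smult r D"] degree_smult_le[of r D] Ce De by linarith
  have dG1: "degree G1 \<le> e - 1"
  proof (cases "G1 = 0")
    case False
    then have "degree G0 = 1 + degree G1" unfolding G1(2) by (subst degree_mult_eq) auto
    then show ?thesis using dG0 by simp
  qed simp
  have id1: "[:-r,1:] * hom D P Q e = L * hom G1 P Q (e - 1)"
  proof -
    have "[:-r,1:] * hom D P Q e = [:0,1:] * hom D P Q e - smult r (hom D P Q e)" by simp
    also have "\<dots> = hom G0 P Q e" unfolding G0_def hom_linear Hx ..
    also have "\<dots> = L * hom G1 P Q (e - 1)" unfolding G1(2) L_def
      using hom_factor[OF sf tx G1(1) PQ(1,2,3) tk e1 dG1] .
    finally show ?thesis .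
  qed
  have hDnz: "hom D P Q e \<noteq> 0" using hDr r(3) Dt by auto
  have oL: "order r L = 1"
  proof -
    have nz: "[:-r,1:] * hom D P Q e \<noteq> 0" using hDnz by (metis mult_eq_0_iff pCons_eq_0_iff one_neq_zero)
    have "order r ([:-r,1:] * hom D P Q e) = 1"
      using nz by (subst order_mult) (auto simp: order_lin order_0I hDr r(3) Dt)
    then have "order r L + order r (hom G1 P Q (e - 1)) = 1" using id1 nz by (simp add: order_mult)
    moreover have "order r L \<noteq> 0" using Lr Lnz order_root by blast
    ultimately show ?thesis by simp
  qed
  obtain A B where AB: "poly_over k A" "poly_over k B" "B \<noteq> 0" "u = poly A x / poly B x * y ^ m" using urep by blast
  have bx: "poly B x \<noteq> 0" using transc_nonzero[OF tx AB(2,3)] .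
  have Anz: "A \<noteq> 0" using u0 AB(4) by auto
  define d where "d = degree F"
  have d1: "d \<ge> 1" using dF unfolding d_def by simp
  define HF where "HF = hom F P Q d"
  have Fid: "A ^ n * F ^ m * Q ^ d = B ^ n * HF"
  proof (rule transc_poly_eq[OF tx sf])
    show "poly_over k (A ^ n * F ^ m * Q ^ d)" using sf AB Fk PQ by (intro poly_over_mult poly_over_power)
    show "poly_over k (B ^ n * HF)" unfolding HF_def using sf AB Fk PQ by (intro poly_over_mult poly_over_power hom_over)
    have hx: "poly HF x = poly Q x ^ d * poly F v" unfolding HF_def d_def PQ(4) by (rule hom_eval[OF order_refl qx])
    have ym: "(y ^ m) ^ n = (y ^ n) ^ m" by (simp only: power_mult[symmetric] mult.commute)
    have "poly F v = u ^ n" using uF by simp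
    also have "\<dots> = (poly A x / poly B x) ^ n * (y ^ m) ^ n" unfolding AB(4) by (rule power_mult_distrib)
    also have "\<dots> = (poly A x / poly B x) ^ n * poly F x ^ m" unfolding ym yF ..
    finally have "poly F v = (poly A x / poly B x) ^ n * poly F x ^ m" .
    then show "poly (A ^ n * F ^ m * Q ^ d) x = poly (B ^ n * HF) x"
      using hx bx by (simp add: power_divide field_simps)
  qed
  have oHF: "HF \<noteq> 0 \<and> order r HF \<le> 1"
  proof (cases "poly F t = 0")
    case False
    have "poly HF r = poly Q r ^ d * poly F t" unfolding HF_def t_def d_def by (rule hom_eval[OF order_refl r(3)])
    then have "poly HF r \<noteq> 0" using False r(3) by simp
    then show ?thesis using order_0I by fastforce
  next
    case True
    obtain F2 where F2: "poly_over k F2" "F = [:-t,1:] * F2" using poly_over_factor[OF sf Fk tk True] by blast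
    have F2nz: "F2 \<noteq> 0" using F0 F2 by auto
    have F2t: "poly F2 t \<noteq> 0"
    proof
      assume "poly F2 t = 0"
      then have "order t F2 \<ge> 1" using F2nz order_root by (metis less_one not_le)
      moreover have "order t F = 1 + order t F2"
      proof -
        have nz: "[:-t,1:] * F2 \<noteq> 0" using F0 unfolding F2(2) .
        show ?thesis unfolding F2(2) order_mult[OF nz] order_lin ..
      qed
      moreover have "order t F = 1" using rsquarefree_root_order[OF sqF True F0] .
      ultimately show False by simp
    qed
    have dF2: "degree F2 \<le> d - 1" unfolding d_def F2(2) using F2nz by (subst degree_mult_eq) auto
    have "HF = L * hom F2 P Q (d - 1)" unfolding HF_def L_def F2(2)
      using hom_factor[OF sf tx F2(1) PQ(1,2,3) tk d1 dF2] by (simp add: d_def F2(2))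
    moreover have "poly (hom F2 P Q (d - 1)) r = poly Q r ^ (d - 1) * poly F2 t"
      unfolding t_def by (rule hom_eval[OF dF2 r(3)])
    then have h2: "poly (hom F2 P Q (d - 1)) r \<noteq> 0" using F2t r(3) by simp
    moreover have h2nz: "hom F2 P Q (d - 1) \<noteq> 0" using h2 by auto
    ultimately have "HF \<noteq> 0" "order r HF = order r L + order r (hom F2 P Q (d - 1))"
      using Lnz by (auto simp: order_mult)
    then show ?thesis using oL order_0I[OF h2] by simp
  qed
  have lhs_nz: "A ^ n * F ^ m * Q ^ d \<noteq> 0" using Anz F0 PQ(3) by simp
  have "order r (A ^ n * F ^ m * Q ^ d) = n * order r A + m * order r F + d * order r Q"
    using lhs_nz Anz F0 PQ(3) by (simp add: order_mult order_power)
  also have "\<dots> = n * order r A + m"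
    using rsquarefree_root_order[OF sqF r(2) F0] order_0I[OF r(3)] by simp
  finally have o1: "order r (A ^ n * F ^ m * Q ^ d) = n * order r A + m" .
  have "order r (B ^ n * HF) = n * order r B + order r HF"
    using oHF AB(3) by (simp add: order_mult order_power)
  then have eq: "n * order r A + m = n * order r B + order r HF" using o1 Fid by simp
  show "m \<le> 1"
  proof (cases "order r B \<le> order r A")
    case True
    then have "n * order r B \<le> n * order r A" by simp
    then show ?thesis using eq oHF by linarith
  next
    case False
    then have "n * (order r A + 1) \<le> n * order r B" by (intro mult_le_mono2) simp
    then show ?thesis using eq oHF mn by (simp add: algebra_simps)
  qed
qed


lemma ratset_UNIV:
  assumes sf: "is_subfield k" and tz: "transcendental_over k z" and gz: "field_gen k {z} = UNIV"
  shows "ratset k z = UNIV"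
  using field_gen_UNIV[OF gz ratset_subfield[OF sf tz]] ratset_k[OF sf] ratset_z[OF sf] by blast

lemma aut_exists:
  assumes sf: "is_subfield k" and tz: "transcendental_over k z" and gz: "field_gen k {z} = UNIV"
    and tw: "transcendental_over k w" and gw: "field_gen k {w} = UNIV"
  shows "\<exists>\<phi>\<in>Aut k. \<phi> z = w"
proof -
  define Rep where "Rep = (\<lambda>a C D. poly_over k C \<and> poly_over k D \<and> D \<noteq> 0 \<and> a = poly C z / poly D z)"
  have rep: "\<exists>C D. Rep a C D" for a
    using ratset_UNIV[OF sf tz gz] unfolding ratset_def Rep_def by blast
  define \<phi> where "\<phi> = (\<lambda>a. SOME c. \<exists>C D. Rep a C D \<and> c = poly C w / poly D w)"
  have wd: "poly C w / poly D w = poly C' w / poly D' w" if "Rep a C D" "Rep a C' D'" for a C D C' D'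
  proof -
    have h: "poly_over k C" "poly_over k D" "D \<noteq> 0" "poly_over k C'" "poly_over k D'" "D' \<noteq> 0"
      "poly C z / poly D z = poly C' z / poly D' z" using that unfolding Rep_def by auto
    have dz: "poly D z \<noteq> 0" "poly D' z \<noteq> 0" using transc_nonzero[OF tz] h by auto
    have dw: "poly D w \<noteq> 0" "poly D' w \<noteq> 0" using transc_nonzero[OF tw] h by auto
    have "poly (C * D') z = poly (C' * D) z" using h(7) dz by (simp add: field_simps)
    then have "C * D' = C' * D" using h sf by (intro transc_poly_eq[OF tz sf] poly_over_mult) auto
    then have "poly (C * D') w = poly (C' * D) w" by simp
    then show ?thesis using dw by (simp add: field_simps)
  qed
  have key: "\<phi> a = poly C w / poly D w" if "Rep a C D" for a C D
  proof -
    have "\<exists>C D. Rep a C D \<and> \<phi> a = poly C w / poly D w"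
      unfolding \<phi>_def by (rule someI_ex) (use that in blast)
    then show ?thesis using wd that by metis
  qed
  have key2: "\<phi> (poly C z / poly D z) = poly C w / poly D w" if "poly_over k C" "poly_over k D" "D \<noteq> 0" for C D
    using key[of "poly C z / poly D z" C D] that unfolding Rep_def by simp
  have p1: "poly_over k 1" using sf poly_over_1 by blast
  show ?thesis
  proof (rule bexI)
    show "\<phi> z = w" using key2[OF poly_over_X[OF sf] p1] by simp
    show "\<phi> \<in> Aut k" unfolding Aut_def
    proof (intro CollectI conjI allI ballI)
      fix a b
      obtain C1 D1 C2 D2 where r: "Rep a C1 D1" "Rep b C2 D2" using rep by blast
      then have h: "poly_over k C1" "poly_over k D1" "D1 \<noteq> 0" "a = poly C1 z / poly D1 z"
        "poly_over k C2" "poly_over k D2" "D2 \<noteq> 0" "b = poly C2 z / poly D2 z" unfolding Rep_def by auto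
      have dz: "poly D1 z \<noteq> 0" "poly D2 z \<noteq> 0" using transc_nonzero[OF tz] h by auto
      have dw: "poly D1 w \<noteq> 0" "poly D2 w \<noteq> 0" using transc_nonzero[OF tw] h by auto
      have DD: "poly_over k (D1 * D2)" "D1 * D2 \<noteq> 0" using h sf poly_over_mult by auto
      have e1: "a + b = poly (C1 * D2 + C2 * D1) z / poly (D1 * D2) z" unfolding h(4,8) using dz by (simp add: field_simps)
      have Cs: "poly_over k (C1 * D2 + C2 * D1)" using h sf by (intro poly_over_add poly_over_mult) auto
      have "\<phi> (a + b) = poly (C1 * D2 + C2 * D1) w / poly (D1 * D2) w"
        unfolding e1 by (rule key2[OF Cs DD])
      also have "\<dots> = \<phi> a + \<phi> b" using key2 h dw by (simp add: field_simps)
      finally show "\<phi> (a + b) = \<phi> a + \<phi> b" .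
      have e2: "a * b = poly (C1 * C2) z / poly (D1 * D2) z" unfolding h(4,8) using dz by (simp add: field_simps)
      have Cm: "poly_over k (C1 * C2)" using h sf by (intro poly_over_mult) auto
      have "\<phi> (a * b) = poly (C1 * C2) w / poly (D1 * D2) w"
        unfolding e2 by (rule key2[OF Cm DD])
      also have "\<dots> = \<phi> a * \<phi> b" using key2 h dw by (simp add: field_simps)
      finally show "\<phi> (a * b) = \<phi> a * \<phi> b" .
    next
      show "\<phi> 1 = 1" using key2[OF p1 p1] by simp
    next
      fix c assume c: "c \<in> k"
      show "\<phi> c = c" using key2[OF poly_over_const[OF sf c] p1] by simp
    next
      show "bij \<phi>" unfolding bij_def
      proof
        show "inj \<phi>"
        proof (rule injI)
          fix a b assume ab: "\<phi> a = \<phi> b"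
          obtain C1 D1 C2 D2 where r: "Rep a C1 D1" "Rep b C2 D2" using rep by blast
          then have h: "poly_over k C1" "poly_over k D1" "D1 \<noteq> 0" "a = poly C1 z / poly D1 z"
            "poly_over k C2" "poly_over k D2" "D2 \<noteq> 0" "b = poly C2 z / poly D2 z" unfolding Rep_def by auto
          have dz: "poly D1 z \<noteq> 0" "poly D2 z \<noteq> 0" using transc_nonzero[OF tz] h by auto
          have dw: "poly D1 w \<noteq> 0" "poly D2 w \<noteq> 0" using transc_nonzero[OF tw] h by auto
          have "poly C1 w / poly D1 w = poly C2 w / poly D2 w" using ab key r by metis
          then have "poly (C1 * D2) w = poly (C2 * D1) w" using dw by (simp add: field_simps)
          then have "C1 * D2 = C2 * D1" using h sf by (intro transc_poly_eq[OF tw sf] poly_over_mult) auto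
          then have "poly (C1 * D2) z = poly (C2 * D1) z" by simp
          then show "a = b" unfolding h(4,8) using dz by (simp add: field_simps)
        qed
        show "surj \<phi>"
        proof -
          have "e \<in> range \<phi>" for e
          proof -
            have "e \<in> ratset k w" using ratset_UNIV[OF sf tw gw] by simp
            then obtain C D where "poly_over k C" "poly_over k D" "D \<noteq> 0" "e = poly C w / poly D w"
              unfolding ratset_def by blast
            then show ?thesis using key2 by (metis rangeI)
          qed
          then show ?thesis by blast
        qed
      qed
    qed
  qed
qed

lemma funpow_fix: "f a = a \<Longrightarrow> (f ^^ i) a = a"
  by (induction i) auto

lemma rational_case:
  assumes ac: "alg_closed_subfield k" and model: "superelliptic_model k n x y F" and dF: "degree F = 1"
    and xi: "\<xi> \<in> k" and prim: "primitive_root n \<xi>" and sA: "s \<in> Aut k" and sx: "s x = x" and sy: "s y = \<xi> * y"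
    and G: "G = {s ^^ j | j. True}"
    and uniq: "\<forall>G'. superelliptic_group k n G' \<longrightarrow> G' = G"
  shows False
proof -
  have sf: "is_subfield k" using ac alg_closed_subfield by blast
  have m: "n \<ge> 2" "transcendental_over k x" "field_gen k {x, y} = UNIV" "poly_over k F"
    "y ^ n = poly F x" using model unfolding superelliptic_model_def by auto
  have xk: "x \<notin> k" using transc_notin[OF m(2) sf] .
  define f0 where "f0 = coeff F 0"
  define f1 where "f1 = coeff F 1"
  have "F \<noteq> 0" using dF by auto
  then have "coeff F (degree F) \<noteq> 0" by simp
  then have f: "f0 \<in> k" "f1 \<in> k" "f1 \<noteq> 0" using m(4) dF unfolding f0_def f1_def
    by (auto simp: poly_over_coeff)
  have pF: "poly F a = f0 + f1 * a" for a
    unfolding poly_altdef dF f0_def f1_def by (simp add: mult.commute)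
  have xy: "x = (y ^ n - f0) / f1" using m(5) pF f(3) by (simp add: field_simps)
  have yk: "y \<notin> k"
  proof
    assume "y \<in> k"
    then have "x \<in> k" unfolding xy using sf f by (intro subfield_divide subfieldD(4) subfield_power)
    then show False using xk by simp
  qed
  have gy: "field_gen k {y} = UNIV"
  proof (rule field_gen_UNIV[OF m(3) field_gen_subfield])
    let ?L = "field_gen k {y}"
    have "y \<in> ?L" "k \<subseteq> ?L" using field_gen_sub[of k "{y}"] by auto
    moreover then have "x \<in> ?L" unfolding xy using f field_gen_subfield[of k "{y}"]
      by (intro subfield_divide subfieldD(4) subfield_power) auto
    ultimately show "k \<union> {x, y} \<subseteq> ?L" by auto
  qed
  have ty: "transcendental_over k y" using transc_iff[OF ac] yk by simp
  have xi0: "\<xi> \<noteq> 0"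
  proof
    assume "\<xi> = 0" then have "\<xi> ^ n = 0" using m(1) by simp
    then show False using prim unfolding primitive_root_def by simp
  qed
  have xi1: "\<xi> \<noteq> 1"
  proof
    assume "\<xi> = 1" then have "\<xi> ^ 1 = 1" by simp
    moreover have "0 < (1::nat) \<and> 1 < n" using m(1) by simp
    ultimately show False using prim unfolding primitive_root_def by blast
  qed
  define w where "w = \<xi> * y + (\<xi> - 1)"
  have yw: "y = (w - (\<xi> - 1)) / \<xi>" unfolding w_def using xi0 by (simp add: field_simps)
  have wk: "w \<notin> k"
  proof
    assume "w \<in> k"
    then have "y \<in> k" unfolding yw using sf xi by (intro subfield_divide subfieldD(4)) (auto intro: subfieldD)
    then show False using yk by simp
  qed
  have tw: "transcendental_over k w" using transc_iff[OF ac] wk by simp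
  have gw: "field_gen k {w} = UNIV"
  proof (rule field_gen_UNIV[OF gy field_gen_subfield])
    let ?L = "field_gen k {w}"
    have "w \<in> ?L" "k \<subseteq> ?L" using field_gen_sub[of k "{w}"] by auto
    moreover then have "y \<in> ?L" unfolding yw using xi field_gen_subfield[of k "{w}"]
      by (intro subfield_divide subfieldD(4)) (auto intro: subfieldD)
    ultimately show "k \<union> {y} \<subseteq> ?L" by auto
  qed
  obtain \<phi> where \<phi>: "\<phi> \<in> Aut k" "\<phi> y = w" using aut_exists[OF sf ty gy tw gw] by blast
  define y' where "y' = y + 1"
  define x' where "x' = y' ^ n"
  have py': "\<phi> y' = \<xi> * y'" unfolding y'_def using \<phi> by (simp add: AutD w_def algebra_simps)
  have px': "\<phi> x' = x'" unfolding x'_def using py' prim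
    by (simp add: aut_power[OF \<phi>(1)] power_mult_distrib primitive_root_def)
  have y'k: "y' \<notin> k"
  proof
    assume "y' \<in> k" then have "y \<in> k" unfolding y'_def using sf by (metis add_diff_cancel_right' subfieldD(2,4))
    then show False using yk by simp
  qed
  have x'k: "x' \<notin> k"
  proof
    assume x'k: "x' \<in> k"
    define p where "p = monom 1 n - [:x':]"
    have "poly_over k p" unfolding p_def using sf x'k
      by (intro poly_over_diff poly_over_const) (auto simp: poly_over_def coeff_monom subfieldD)
    moreover have "p \<noteq> 0"
    proof
      assume "p = 0"
      then have "coeff (monom 1 n) n = coeff [:x':] n" unfolding p_def by (metis eq_iff_diff_eq_0)
      then show False using m(1) by (cases n) (auto simp: coeff_monom)
    qed
    moreover have "poly p y' = 0" unfolding p_def x'_def by (simp add: poly_monom)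
    ultimately have "y' \<in> k" using alg_closed_in_k[OF ac] by blast
    then show False using y'k by simp
  qed
  have model': "superelliptic_model k n x' y' [:0,1:]"
    unfolding superelliptic_model_def
  proof (intro conjI)
    show "n \<ge> 2" by (rule m(1))
    show "transcendental_over k x'" using transc_iff[OF ac] x'k by simp
    show "field_gen k {x', y'} = UNIV"
    proof (rule field_gen_UNIV[OF gy field_gen_subfield])
      let ?L = "field_gen k {x', y'}"
      have "y' \<in> ?L" "k \<subseteq> ?L" using field_gen_sub[of k "{x', y'}"] by auto
      moreover then have "y \<in> ?L" using field_gen_subfield[of k "{x', y'}"] unfolding y'_def
        by (metis add_diff_cancel_right' subfieldD(2,4) subsetD)
      ultimately show "k \<union> {y} \<subseteq> ?L" by auto
    qed
    show "poly_over k [:0,1:]" using poly_over_X[OF sf] .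
    show "degree [:0::'a,1:] > 0" by simp
    show "rsquarefree [:0::'a,1:]" unfolding rsquarefree_def
    proof (intro conjI allI)
      fix a :: 'a
      have "order a [:0,1:] \<le> degree [:0::'a,1:]" by (rule order_degree) simp
      then show "order a [:0,1:] = 0 \<or> order a [:0::'a,1:] = 1" by (simp add: le_Suc_eq)
    qed simp
    show "y' ^ n = poly [:0,1:] x'" unfolding x'_def by simp
  qed
  have "superelliptic_group k n {\<phi> ^^ j | j. True}"
    unfolding superelliptic_group_def using model' xi prim \<phi>(1) px' py' by blast
  then have "{\<phi> ^^ j | j. True} = G" using uniq by blast
  moreover have "\<phi> \<in> {\<phi> ^^ j | j. True}"
  proof -
    have "\<phi> = \<phi> ^^ 1" by simp
    then show ?thesis by blast
  qed
  ultimately obtain i where i: "\<phi> = s ^^ i" using G by blast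
  have "(s ^^ i) y = \<xi> ^ i * y"
    by (induction i) (auto simp: sy AutD(3)[OF sA] AutD(5)[OF sA] xi sf subfield_power)
  then have "\<xi> * y + (\<xi> - 1) = \<xi> ^ i * y" using \<phi>(2) i unfolding w_def by simp
  then have e: "(\<xi> - \<xi> ^ i) * y = 1 - \<xi>" by (simp add: algebra_simps)
  show False
  proof (cases "\<xi> = \<xi> ^ i")
    case True then show False using e xi1 by simp
  next
    case False
    then have "y = (1 - \<xi>) / (\<xi> - \<xi> ^ i)" using e by (simp add: field_simps)
    then have "y \<in> k" using sf xi by (auto intro!: subfield_divide subfieldD(4) subfield_power intro: subfieldD)
    then show False using yk by simp
  qed
qed


theorem lemma4p22:
  fixes k :: "'a::field set" and n :: nat and G :: "('a \<Rightarrow> 'a) set"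
  assumes "alg_closed_subfield k"
    and "superelliptic_curve k n"
    and "superelliptic_group k n G"
    and "finite G" and "card G = n"
    and "\<forall>G'. superelliptic_group k n G' \<longrightarrow> G' = G"
  shows "\<forall>\<sigma>\<in>G. \<forall>\<tau>\<in>Aut k. \<sigma> \<circ> \<tau> = \<tau> \<circ> \<sigma>"
proof -
  obtain x y F \<xi> s where h: "superelliptic_model k n x y F" "\<xi> \<in> k" "primitive_root n \<xi>" "s \<in> Aut k"
    "s x = x" "s y = \<xi> * y" "G = {s ^^ j | j. True}"
    using assms(3) unfolding superelliptic_group_def by blast
  interpret S: sdata k n x y F \<xi> s using assms(1) h by unfold_locales auto
  have sf: "is_subfield k" by (rule S.sf)
  have mF: "poly_over k F" "degree F > 0" "rsquarefree F" using h(1) unfolding superelliptic_model_def by auto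
  have dF: "degree F \<ge> 2"
  proof (rule ccontr)
    assume "\<not> degree F \<ge> 2"
    then have "degree F = 1" using mF(2) by simp
    then show False using rational_case[OF assms(1) h(1) _ h(2-7) assms(6)] by blast
  qed
  have xi1: "\<xi> \<noteq> 1"
  proof
    assume "\<xi> = 1" then have "\<xi> ^ 1 = 1" by simp
    moreover have "0 < (1::nat) \<and> 1 < n" using S.n2 by simp
    ultimately show False using h(3) unfolding primitive_root_def by blast
  qed
  have y0: "y \<noteq> 0"
  proof
    assume "y = 0"
    moreover have "n \<noteq> 0" using S.n2 by simp
    ultimately have "poly F x = 0" using S.yF by (metis power_0_left)
    moreover have "F \<noteq> 0" using mF(3) unfolding rsquarefree_def by simp
    ultimately show False using transc_nonzero[OF S.tx mF(1)] by blast
  qed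
  have comm: "\<tau> (s z) = s (\<tau> z)" if \<tau>: "\<tau> \<in> Aut k" for \<tau> z
  proof -
    define \<sigma> where "\<sigma> = \<tau> \<circ> s \<circ> inv \<tau>"
    have \<sigma>A: "\<sigma> \<in> Aut k" unfolding \<sigma>_def using \<tau> h(4) by (intro aut_comp aut_inv)
    have model2: "superelliptic_model k n (\<tau> x) (\<tau> y) F" using model_transport[OF h(1) \<tau>] .
    have \<sigma>x: "\<sigma> (\<tau> x) = \<tau> x" unfolding \<sigma>_def using aut_inv_left[OF \<tau>] h(5) by simp
    have \<sigma>y: "\<sigma> (\<tau> y) = \<xi> * \<tau> y" unfolding \<sigma>_def using aut_inv_left[OF \<tau>] h(6) AutD(3,5)[OF \<tau>] h(2) by simp
    have "superelliptic_group k n {\<sigma> ^^ j | j. True}"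
      unfolding superelliptic_group_def using model2 h(2,3) \<sigma>A \<sigma>x \<sigma>y by blast
    then have GG: "{\<sigma> ^^ j | j. True} = G" using assms(6) by blast
    have "\<sigma> = \<sigma> ^^ 1" by simp
    then have "\<sigma> \<in> G" using GG by blast
    then obtain j where j: "\<sigma> = s ^^ j" using h(7) by blast
    have "s = s ^^ 1" by simp
    then have "s \<in> G" using h(7) by blast
    then obtain l where l: "s = \<sigma> ^^ l" using GG by blast
    have conj: "(\<sigma> ^^ i) w = \<tau> ((s ^^ i) (inv \<tau> w))" for i w
    proof (induction i)
      case 0 then show ?case using aut_inv_right[OF \<tau>] by simp
    next
      case (Suc i) then show ?case unfolding \<sigma>_def using aut_inv_left[OF \<tau>] by simp
    qed
    have sjl: "s = s ^^ (j * l)" using l j by (simp add: funpow_mult)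
    have xjl: "\<xi> ^ (j * l) = \<xi>"
    proof -
      have "\<xi> * y = \<xi> ^ (j * l) * y" using S.spow(3)[of "j * l"] sjl h(6) by metis
      then show ?thesis using y0 by simp
    qed
    define u where "u = \<tau> y"
    define v where "v = \<tau> x"
    define m where "m = l mod n"
    have mn: "m < n" unfolding m_def using S.n2 by simp
    have xl: "\<xi> ^ l = \<xi> ^ m"
    proof -
      have "\<xi> ^ l = \<xi> ^ (n * (l div n) + l mod n)" by simp
      also have "\<dots> = (\<xi> ^ n) ^ (l div n) * \<xi> ^ (l mod n)" by (simp only: power_add power_mult)
      finally show ?thesis unfolding m_def using S.xin by simp
    qed
    have "\<xi> ^ l \<in> k" using h(2) sf subfield_power by blast
    have su: "s u = \<xi> ^ m * u"
    proof -
      have "s u = (\<sigma> ^^ l) u" using l by simp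
      also have "\<dots> = \<tau> (\<xi> ^ l * y)" unfolding conj u_def using aut_inv_left[OF \<tau>] S.spow(3) by simp
      also have "\<dots> = \<xi> ^ l * u" unfolding u_def using AutD(3,5)[OF \<tau>] \<open>\<xi> ^ l \<in> k\<close> by simp
      finally show ?thesis using xl by simp
    qed
    have sv: "s v = \<xi> ^ 0 * v"
    proof -
      have "s v = (\<sigma> ^^ l) v" using l by simp
      also have "\<dots> = v" unfolding conj v_def using aut_inv_left[OF \<tau>] S.spow(2) by simp
      finally show ?thesis by simp
    qed
    have urep: "\<exists>A B. poly_over k A \<and> poly_over k B \<and> B \<noteq> 0 \<and> u = poly A x / poly B x * y ^ m"
      using S.eig[OF mn su] .
    have vrep: "\<exists>P Q. poly_over k P \<and> poly_over k Q \<and> Q \<noteq> 0 \<and> v = poly P x / poly Q x"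
      using S.eig[OF _ sv] S.n2 by simp
    have \<sigma>x': "\<sigma> x = x" using j S.spow(2) by simp
    interpret S2: sdata k n v u F \<xi> \<sigma>
      using assms(1) model2 h(2,3) \<sigma>A \<sigma>x \<sigma>y unfolding u_def v_def by unfold_locales auto
    have xrep: "\<exists>C D. poly_over k C \<and> poly_over k D \<and> poly D v \<noteq> 0 \<and> x = poly C v / poly D v"
    proof -
      obtain C D where CD: "poly_over k C" "poly_over k D" "D \<noteq> 0" "x = poly C v / poly D v * u ^ 0"
        using S2.eig[of 0 x] S.n2 \<sigma>x' by auto
      have "poly D v \<noteq> 0" using transc_nonzero[OF S2.tx CD(2,3)] .
      then show ?thesis using CD by auto
    qed
    have u0: "u \<noteq> 0" unfolding u_def using y0 aut_eq0[OF \<tau>] by simp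
    have uF: "u ^ n = poly F v" using S2.yF .
    have vk: "v \<notin> k" using transc_notin[OF S2.tx sf] .
    have "m \<le> 1" using key_poly[OF assms(1) S.tx mF(1) mF(3) dF vrep xrep urep u0 S.yF uF vk mn] .
    moreover have "m \<noteq> 0"
    proof
      assume "m = 0"
      then have "\<xi> ^ l = 1" using xl by simp
      then have "\<xi> ^ (j * l) = 1" by (simp add: power_mult mult.commute[of j l])
      then show False using xjl xi1 by simp
    qed
    ultimately have "m = 1" by simp
    then have "\<xi> ^ l = \<xi>" using xl by simp
    then have xj: "\<xi> ^ j = \<xi>" using xjl by (simp add: power_mult mult.commute[of j l])
    have "s ^^ j = s"
    proof (rule aut_eq[OF S.spow(1) h(4) S.gen])
      show "(s ^^ j) x = s x" using S.spow(2) h(5) by simp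
      show "(s ^^ j) y = s y" using S.spow(3) h(6) xj by simp
    qed
    then have "\<sigma> = s" using j by simp
    then have "\<sigma> (\<tau> z) = s (\<tau> z)" by simp
    then show ?thesis unfolding \<sigma>_def using aut_inv_left[OF \<tau>] by simp
  qed
  show ?thesis
  proof (intro ballI)
    fix \<sigma> \<tau> assume "\<sigma> \<in> G" "\<tau> \<in> Aut k"
    then obtain i where i: "\<sigma> = s ^^ i" using h(7) by blast
    have "(s ^^ i) (\<tau> z) = \<tau> ((s ^^ i) z)" for z
      by (induction i) (auto simp: comm[OF \<open>\<tau> \<in> Aut k\<close>])
    then show "\<sigma> \<circ> \<tau> = \<tau> \<circ> \<sigma>" unfolding i by auto
  qed
qed

end
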